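(* Let $(\mathcal{S},\mathcal{R})$ be a positive presentation and let $\curvearrowright_r'$ be the binary relation on words on $\mathcal{S}\cup\mathcal{S}^{-1}$ defined as $\curvearrowright_r$ except that in each step the words $u$ and $v$ are required to have length exactly $1$: that is, $\mathbf{w}\curvearrowright_r'\mathbf{w}'$ if $\mathbf{w}'$ is obtained from $\mathbf{w}$ by a finite sequence of steps each of which either deletes a subword $s^{-1}s$ with $s\in\mathcal{S}$, or replaces a subword $s^{-1}t$ with $s,t\in\mathcal{S}$ by a word $v'u'^{-1}$ ($u',v'\in\mathcal{S}^*$) such that $sv'=tu'$ is a relation of $\mathcal{R}$. Then $\curvearrowright_r'$ coincides with $\curvearrowright_r$.
   Context: A positive presentation is a pair $(\mathcal{S},\mathcal{R})$ where $\mathcal{S}$ is a nonempty set of letters and $\mathcal{R}$ is a family of relations $u=v$, i.e. unordered pairs $\{u,v\}$ of nonempty words in the free monoid $\mathcal{S}^*$. Let $\mathcal{S}^{-1}=\{s^{-1}:s\in\mathcal{S}\}$ be a disjoint copy of $\mathcal{S}$; for $u\in\mathcal{S}^*$, $u^{-1}$ is obtained by reversing the order of the letters of $u$ and replacing each $s$ by $s^{-1}$. Right reversing: for words $\mathbf{w},\mathbf{w}'$ on $\mathcal{S}\cup\mathcal{S}^{-1}$ we write $\mathbf{w}\curvearrowright_r\mathbf{w}'$ if $\mathbf{w}'$ is obtained from $\mathbf{w}$ by a finite (possibly empty) sequence of steps, each of which either deletes a subword $u^{-1}u$ with $u\in\mathcal{S}^*$ nonempty, or replaces a subword $u^{-1}v$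 with $u,v\in\mathcal{S}^*$ nonempty by a word $v'u'^{-1}$ with $u',v'\in\mathcal{S}^*$ such that $uv'=vu'$ is a relation of $\mathcal{R}$. *)

theory Defs
  imports Main
begin

text \<open>Letters of S \<union> S^-1: Pos s stands for s, Neg s for s^-1.
  The alphabet S is the (nonempty) type 'a; words are lists.\<close>
datatype 'a sletter = Pos 'a | Neg 'a

definition pw :: "'a list \<Rightarrow> 'a sletter list" where
  "pw u = map Pos u"

definition inv_word :: "'a list \<Rightarrow> 'a sletter list" where
  "inv_word u = rev (map Neg u)"

text \<open>A family of relations is a set of pairs (u,v) read as unordered pairs {u,v}.\<close>
definition is_rel :: "('a list \<times> 'a list) set \<Rightarrow> 'a list \<Rightarrow> 'a list \<Rightarrow> bool" where
  "is_rel R p q \<longleftrightarrow> (p, q) \<in> R \<or> (q, p) \<in> R"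

definition positive_presentation :: "('a list \<times> 'a list) set \<Rightarrow> bool" where
  "positive_presentation R \<longleftrightarrow> (\<forall>(u, v) \<in> R. u \<noteq> [] \<and> v \<noteq> [])"

definition rev_step :: "(nat \<Rightarrow> nat \<Rightarrow> bool) \<Rightarrow> ('a list \<times> 'a list) set
    \<Rightarrow> 'a sletter list \<Rightarrow> 'a sletter list \<Rightarrow> bool" where
  "rev_step P R w w' \<longleftrightarrow>
     (\<exists>x y u v. w = x @ inv_word u @ pw v @ y \<and> u \<noteq> [] \<and> v \<noteq> [] \<and>
        P (length u) (length v) \<and>
        ((u = v \<and> w' = x @ y) \<or>
         (\<exists>u' v'. is_rel R (u @ v') (v @ u') \<and> w' = x @ pw v' @ inv_word u' @ y)))"

definition right_rev :: "('a list \<times> 'a list) set \<Rightarrow> 'a sletter list \<Rightarrow> 'a sletter list \<Rightarrow> bool" where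
  "right_rev R = (rev_step (\<lambda>_ _. True) R)\<^sup>*\<^sup>*"

definition right_rev1 :: "('a list \<times> 'a list) set \<Rightarrow> 'a sletter list \<Rightarrow> 'a sletter list \<Rightarrow> bool" where
  "right_rev1 R = (rev_step (\<lambda>m n. m = 1 \<and> n = 1) R)\<^sup>*\<^sup>*"

end

theory Submission
  imports Defs
begin

lemma cancel1:
  "right_rev1 R (x @ inv_word u @ pw u @ y) (x @ y)"
proof (induction u arbitrary: y)
  case Nil
  then show ?case by (simp add: right_rev1_def inv_word_def pw_def)
next
  case (Cons a u)
  have st: "rev_step (\<lambda>m n. m = 1 \<and> n = 1) R
     (x @ inv_word (a # u) @ pw (a # u) @ y) (x @ inv_word u @ pw u @ y)"
    unfolding rev_step_def
    apply (rule exI[where x="x @ inv_word u"])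
    apply (rule exI[where x="pw u @ y"])
    apply (rule exI[where x="[a]"])
    apply (rule exI[where x="[a]"])
    by (simp add: inv_word_def pw_def)
  show ?case unfolding right_rev1_def
    using st Cons.IH[of y] unfolding right_rev1_def
    by (meson converse_rtranclp_into_rtranclp)
qed

lemma step_sim:
  assumes "rev_step (\<lambda>_ _. True) R w w'"
  shows "right_rev1 R w w'"
proof -
  from assms obtain x y u v where w: "w = x @ inv_word u @ pw v @ y"
    and un: "u \<noteq> []" and vn: "v \<noteq> []"
    and c: "(u = v \<and> w' = x @ y) \<or>
         (\<exists>u' v'. is_rel R (u @ v') (v @ u') \<and> w' = x @ pw v' @ inv_word u' @ y)"
    unfolding rev_step_def by blast
  show ?thesis
  proof (cases "u = v \<and> w' = x @ y")
    case True
    then show ?thesis using w cancel1 by metis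
  next
    case False
    with c obtain u' v' where r: "is_rel R (u @ v') (v @ u')"
      and w': "w' = x @ pw v' @ inv_word u' @ y" by blast
    obtain a u1 where ua: "u = a # u1" using un by (cases u) auto
    obtain b v1 where vb: "v = b # v1" using vn by (cases v) auto
    let ?m = "x @ inv_word u1 @ pw (u1 @ v') @ inv_word (v1 @ u') @ pw v1 @ y"
    have st: "rev_step (\<lambda>m n. m = 1 \<and> n = 1) R w ?m"
      unfolding rev_step_def
      apply (rule exI[where x="x @ inv_word u1"])
      apply (rule exI[where x="pw v1 @ y"])
      apply (rule exI[where x="[a]"])
      apply (rule exI[where x="[b]"])
      apply (intro conjI)
          apply (simp add: w ua vb inv_word_def pw_def)
         apply simp
        apply simp
       apply simp
      apply simp
      apply (rule disjI2)
      apply (rule exI[where x="v1 @ u'"])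
      apply (rule exI[where x="u1 @ v'"])
      using r by (simp add: w ua vb inv_word_def pw_def)
    have m: "?m = x @ inv_word u1 @ pw u1 @ (pw v' @ inv_word u' @ inv_word v1 @ pw v1 @ y)"
      by (simp add: inv_word_def pw_def)
    have c1: "right_rev1 R ?m (x @ pw v' @ inv_word u' @ inv_word v1 @ pw v1 @ y)"
      unfolding m by (rule cancel1)
    have c2: "right_rev1 R (x @ pw v' @ inv_word u' @ inv_word v1 @ pw v1 @ y) w'"
      using cancel1[of R "x @ pw v' @ inv_word u'" v1 y] by (simp add: w')
    show ?thesis using st c1 c2 unfolding right_rev1_def
      by (meson converse_rtranclp_into_rtranclp rtranclp_trans)
  qed
qed

theorem lemma1p4:
  fixes R :: "('a list \<times> 'a list) set"
  assumes "positive_presentation R"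
  shows "right_rev1 R = right_rev R"
proof (intro ext iffI)
  fix w w'
  assume "right_rev1 R w w'"
  then show "right_rev R w w'" unfolding right_rev1_def right_rev_def
  proof (induction rule: rtranclp_induct)
    case base then show ?case by simp
  next
    case (step y z)
    have "rev_step (\<lambda>_ _. True) R y z" using step(2) unfolding rev_step_def by blast
    then show ?case using step(3) by (meson rtranclp.rtrancl_into_rtrancl)
  qed
next
  fix w w'
  assume "right_rev R w w'"
  then show "right_rev1 R w w'" unfolding right_rev_def
  proof (induction rule: rtranclp_induct)
    case base then show ?case by (simp add: right_rev1_def)
  next
    case (step y z)
    then show ?case using step_sim[OF step(2)] unfolding right_rev1_def
      by (meson rtranclp_trans)
  qed
qed

end
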